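(* Let $d\ge3$, let $u,v\in\mathbb{S}^{d-1}$ be unit vectors with $\theta(u,v)=\theta\in[0,\frac9{10}\pi]$, and let $0\le\xi\le\frac{\theta}{4\sqrt d}$. Let $x$ be drawn uniformly from $\{x\in\mathbb{S}^{d-1}: v\cdot x=\xi\}$ (i.e. uniform on the sphere conditioned on $v\cdot x=\xi$). Then: (1) $\mathbb{E}[u\cdot x]\le\xi$; (2) $\mathbb{E}[(u\cdot x)^2]\le\frac{5\theta^2}{d}$; (3) $\mathbb{E}[(u\cdot x)\,\mathbb{1}\{u\cdot x<0\}]\le\xi-\frac{\theta}{36\sqrt d}$.
   Context: $\mathbb{S}^{d-1}$ is the unit sphere in $\mathbb{R}^d$; $\theta(u,v)=\arccos(u\cdot v)$. *)

theory Defs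
  imports "HOL-Probability.Probability"
begin

definition sphere_slice :: "'a::euclidean_space \<Rightarrow> real \<Rightarrow> 'a set" where
  "sphere_slice v \<xi> = {x. norm x = 1 \<and> v \<bullet> x = \<xi>}"

text \<open>M is the uniform distribution on the slice: a Borel probability measure
  concentrated on the slice and invariant under every orthogonal transformation
  fixing v (the symmetry group of the slice, which acts transitively on it).\<close>
definition uniform_on_slice :: "'a::euclidean_space measure \<Rightarrow> 'a \<Rightarrow> real \<Rightarrow> bool" where
  "uniform_on_slice M v \<xi> \<longleftrightarrow>
     prob_space M \<and> sets M = sets borel \<and>
     emeasure M (sphere_slice v \<xi>) = 1 \<and>
     (\<forall>T. orthogonal_transformation T \<and> T v = v \<longrightarrow> distr M borel T = M)"

end

theory Submission imports Defs begin


definition hh :: "'a::real_inner \<Rightarrow> 'a \<Rightarrow> 'a" where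
  "hh a x = x - (2 * (a \<bullet> x) / (a \<bullet> a)) *\<^sub>R a"

lemma hh_linear: "linear (hh a)"
  unfolding hh_def by (intro linearI) (auto simp: inner_add_right algebra_simps add_divide_distrib scaleR_add_left)

lemma hh_sym: "hh a x \<bullet> y = x \<bullet> hh a y"
  unfolding hh_def by (simp add: inner_diff_left inner_diff_right inner_commute algebra_simps)

lemma hh_invol: "hh a (hh a x) = x"
proof (cases "a = 0")
  case True then show ?thesis by (simp add: hh_def)
next
  case False
  then have "a \<bullet> a \<noteq> 0" by simp
  then show ?thesis unfolding hh_def
    by (simp add: inner_diff_right algebra_simps)
qed

lemma hh_inner: "hh a x \<bullet> hh a y = x \<bullet> y"
  by (simp add: hh_sym hh_invol)

lemma hh_orth: "orthogonal_transformation (hh a)"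
  unfolding orthogonal_transformation_def using hh_linear hh_inner by blast

lemma hh_fix: "a \<bullet> x = 0 \<Longrightarrow> hh a x = x"
  by (simp add: hh_def)

lemma hh_neg: "hh a a = - a"
  by (cases "a = 0") (simp_all add: hh_def scaleR_2)

lemma hh_swap: assumes "norm p = norm q" shows "hh (p - q) p = q"
proof (cases "p = q")
  case True then show ?thesis by (simp add: hh_def)
next
  case False
  have pp: "p \<bullet> p = q \<bullet> q" using assms by (simp add: power2_norm_eq_inner[symmetric])
  have "(p - q) \<bullet> (p - q) = 2 * ((p - q) \<bullet> p)"
    using pp by (simp add: inner_diff_left inner_diff_right inner_commute)
  moreover have "(p - q) \<bullet> (p - q) \<noteq> 0" using False by simp
  ultimately have "2 * ((p - q) \<bullet> p) / ((p - q) \<bullet> (p - q)) = 1" by (metis divide_self)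
  then have "hh (p - q) p = p - 1 *\<^sub>R (p - q)" unfolding hh_def by (simp only:)
  then show ?thesis by simp
qed

lemma hh_cont: "continuous_on UNIV (hh (a::'a::euclidean_space))"
  by (rule linear_continuous_on) (use hh_linear linear_conv_bounded_linear in blast)



locale slice_ctx =
  fixes M :: "(real^'n) measure" and v :: "real^'n" and \<xi> :: real
  assumes unif: "uniform_on_slice M v \<xi>" and vn: "norm v = 1"
begin

lemma ps: "prob_space M" using unif by (simp add: uniform_on_slice_def)
lemma setsM: "sets M = sets borel" using unif by (simp add: uniform_on_slice_def)

lemma meas_iff: "f \<in> borel_measurable M \<longleftrightarrow> f \<in> borel_measurable borel"
  by (simp add: measurable_cong_sets[OF setsM refl])

lemma cont_meas: "continuous_on UNIV f \<Longrightarrow> f \<in> borel_measurable M"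
  by (simp add: meas_iff borel_measurable_continuous_onI)

lemma AE_S: "AE x in M. norm x = 1 \<and> v \<bullet> x = \<xi>"
proof -
  interpret prob_space M by (rule ps)
  have c: "closed (sphere_slice v \<xi>)" unfolding sphere_slice_def
    by (intro closed_Collect_conj closed_Collect_eq continuous_intros)
  then have "sphere_slice v \<xi> \<in> events" using setsM by (simp add: borel_closed)
  moreover have "prob (sphere_slice v \<xi>) = 1" using unif by (simp add: uniform_on_slice_def measure_def)
  ultimately have "AE x in M. x \<in> sphere_slice v \<xi>" using AE_in_set_eq_1 by blast
  then show ?thesis by (simp add: sphere_slice_def)
qed

lemma integ: assumes "continuous_on UNIV g" shows "integrable M (g :: real^'n \<Rightarrow> real)"
proof -
  interpret prob_space M by (rule ps)
  have "sphere_slice v \<xi> = sphere 0 1 \<inter> {x. v \<bullet> x = \<xi>}" by (auto simp: sphere_slice_def)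
  moreover have "closed {x. v \<bullet> x = \<xi>}" by (intro closed_Collect_eq continuous_intros)
  ultimately have K: "compact (sphere_slice v \<xi>)" by (simp add: compact_Int_closed)
  have "compact (g ` sphere_slice v \<xi>)"
    by (rule compact_continuous_image[OF continuous_on_subset[OF assms subset_UNIV] K])
  then obtain B where B: "\<forall>y\<in>g ` sphere_slice v \<xi>. norm y \<le> B"
    using compact_imp_bounded bounded_iff by metis
  have "AE x in M. norm (g x) \<le> B" using AE_S
    by eventually_elim (use B in \<open>auto simp: sphere_slice_def\<close>)
  then show ?thesis using cont_meas[OF assms] by (rule integrable_const_bound)
qed

lemma inv_int: assumes "a \<bullet> v = 0" and gm: "g \<in> borel_measurable borel"
  shows "(\<integral>x. g (hh a x) \<partial>M) = (\<integral>x. (g x :: real) \<partial>M)"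
proof -
  have "hh a v = v" by (rule hh_fix) (use assms in simp)
  moreover have "\<forall>T. orthogonal_transformation T \<and> T v = v \<longrightarrow> distr M borel T = M"
    using unif by (simp add: uniform_on_slice_def)
  ultimately have D: "distr M borel (hh a) = M" using hh_orth by blast
  have m: "hh a \<in> measurable M borel" using cont_meas hh_cont by blast
  have "(\<integral>x. g x \<partial>M) = (\<integral>x. g x \<partial>(distr M borel (hh a)))" by (simp add: D)
  also have "\<dots> = (\<integral>x. g (hh a x) \<partial>M)" by (rule integral_distr[OF m gm])
  finally show ?thesis by simp
qed

lemma odd_zero: assumes "q \<bullet> v = 0" "p \<bullet> q = 0" "odd b"
  shows "(\<integral>x. (p \<bullet> x)^a * (q \<bullet> x)^b \<partial>M) = 0"
proof -
  let ?g = "\<lambda>x. (p \<bullet> x)^a * (q \<bullet> x)^b"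
  have gm: "?g \<in> borel_measurable borel"
    by (intro borel_measurable_continuous_onI continuous_intros)
  have eq: "?g (hh q x) = - ?g x" for x
  proof -
    have "p \<bullet> hh q x = p \<bullet> x" using hh_sym[of q x p] hh_fix[of q p] assms
      by (simp add: inner_commute)
    moreover have "q \<bullet> hh q x = - (q \<bullet> x)" using hh_sym[of q x q] hh_neg[of q]
      by (simp add: inner_commute)
    ultimately show ?thesis using assms(3) by simp
  qed
  have "(\<integral>x. ?g x \<partial>M) = (\<integral>x. ?g (hh q x) \<partial>M)" using inv_int[OF assms(1) gm] by simp
  also have "\<dots> = (\<integral>x. - ?g x \<partial>M)" by (simp only: eq)
  finally show ?thesis by simp
qed

lemma eq_norm: assumes "p \<bullet> v = 0" "q \<bullet> v = 0" "norm p = norm q"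
  shows "(\<integral>x. (p \<bullet> x)^k \<partial>M) = (\<integral>x. (q \<bullet> x)^k \<partial>M)"
proof -
  have a: "(p - q) \<bullet> v = 0" using assms by (simp add: inner_diff_left)
  have hq: "hh (p - q) q = p" using hh_swap[OF assms(3)] hh_invol by metis
  have eq: "q \<bullet> hh (p - q) x = p \<bullet> x" for x
    using hh_sym[of "p - q" x q] hq by (simp add: inner_commute)
  have gm: "(\<lambda>x. (q \<bullet> x)^k) \<in> borel_measurable borel"
    by (intro borel_measurable_continuous_onI continuous_intros)
  show ?thesis using inv_int[OF a gm] by (simp add: eq)
qed

lemma hom: assumes "p \<bullet> v = 0" "f0 \<bullet> v = 0" "norm f0 = 1" "0 < k"
  shows "(\<integral>x. (p \<bullet> x)^k \<partial>M) = norm p ^ k * (\<integral>x. (f0 \<bullet> x)^k \<partial>M)"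
proof (cases "p = 0")
  case True then show ?thesis using assms by simp
next
  case False
  define p' where "p' = (1 / norm p) *\<^sub>R p"
  have p'v: "p' \<bullet> v = 0" using assms by (simp add: p'_def)
  have p'n: "norm p' = 1" using False by (simp add: p'_def)
  have pp: "p = norm p *\<^sub>R p'" using False by (simp add: p'_def)
  have "(p \<bullet> x)^k = norm p ^ k * (p' \<bullet> x)^k" for x
    by (subst pp) (simp add: power_mult_distrib)
  then have "(\<integral>x. (p \<bullet> x)^k \<partial>M) = norm p ^ k * (\<integral>x. (p' \<bullet> x)^k \<partial>M)" by simp
  also have "\<dots> = norm p ^ k * (\<integral>x. (f0 \<bullet> x)^k \<partial>M)"
    using eq_norm[OF p'v assms(2)] p'n assms(3) by simp
  finally show ?thesis .
qed

end


context slice_ctx begin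

lemma moments: assumes d: "CARD('n) \<ge> 3"
  obtains f0 where "f0 \<bullet> v = 0" "norm f0 = 1"
    "(\<integral>x. (f0 \<bullet> x)^2 \<partial>M) = (1 - \<xi>^2) / (real CARD('n) - 1)"
    "(\<integral>x. (f0 \<bullet> x)^4 \<partial>M) = 3 * (1 - \<xi>^2)^2 / ((real CARD('n) - 1) * (real CARD('n) + 1))"
proof -
  interpret prob_space M by (rule ps)
  obtain k :: 'n where True by simp
  define e where "e = (axis k 1 :: real^'n)"
  define H where "H = hh (v - e)"
  define fb where "fb i = H (axis i 1)" for i
  define K where "K = UNIV - {k}"
  have ne: "norm e = 1" by (simp add: e_def)
  have Hv: "H v = e" unfolding H_def by (rule hh_swap) (simp add: vn ne)
  have He: "H e = v" using Hv hh_invol unfolding H_def by metis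
  have fbi: "fb i \<bullet> fb j = (if i = j then 1 else 0)" for i j
    by (simp add: fb_def H_def hh_inner inner_axis_axis)
  have fbk: "fb k = v" using He by (simp add: fb_def e_def)
  have fbv: "fb i \<bullet> v = 0" if "i \<in> K" for i using fbi[of i k] fbk that K_def by auto
  have fbn: "norm (fb i) = 1" for i using fbi[of i i] by (simp add: norm_eq_sqrt_inner)
  have pars: "(\<Sum>i\<in>UNIV. (fb i \<bullet> x)^2) = (norm x)^2" for x
  proof -
    have c: "fb i \<bullet> x = (H x) $ i" for i
      using hh_sym[of "v - e" "axis i 1" x] by (simp add: fb_def H_def inner_axis')
    have "(\<Sum>i\<in>UNIV. (fb i \<bullet> x)^2) = H x \<bullet> H x"
      by (simp only: c) (simp add: inner_vec_def power2_eq_square)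
    also have "\<dots> = (norm x)^2" by (simp add: H_def hh_inner power2_norm_eq_inner)
    finally show ?thesis .
  qed
  have cardK: "card K = CARD('n) - 1" by (simp add: K_def card_Diff_singleton)
  have sumK: "(\<Sum>i\<in>K. (fb i \<bullet> x)^2) = 1 - \<xi>^2" if "norm x = 1" "v \<bullet> x = \<xi>" for x
  proof -
    have "(\<Sum>i\<in>K. (fb i \<bullet> x)^2) = (\<Sum>i\<in>UNIV. (fb i \<bullet> x)^2) - (fb k \<bullet> x)^2"
      unfolding K_def by (simp add: sum_diff1)
    then show ?thesis using pars[of x] that fbk by simp
  qed
  have cK2: "card K \<ge> 2" using cardK d by simp
  then obtain j0 where j0: "j0 \<in> K" by (metis all_not_in_conv card.empty not_numeral_le_zero)
  define f0 where "f0 = fb j0"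
  have f0v: "f0 \<bullet> v = 0" using fbv[OF j0] by (simp add: f0_def)
  have f0n: "norm f0 = 1" by (simp add: f0_def fbn)
  define c2 where "c2 = (\<integral>x. (f0 \<bullet> x)^2 \<partial>M)"
  define c4 where "c4 = (\<integral>x. (f0 \<bullet> x)^4 \<partial>M)"
  have e2: "(\<integral>x. (fb i \<bullet> x)^2 \<partial>M) = c2" if "i \<in> K" for i
    unfolding c2_def using eq_norm[OF fbv[OF that] f0v] fbn f0n by simp
  have e4: "(\<integral>x. (fb i \<bullet> x)^4 \<partial>M) = c4" if "i \<in> K" for i
    unfolding c4_def using eq_norm[OF fbv[OF that] f0v] fbn f0n by simp
  have fin: "finite K" by simp
  have "(\<integral>x. (\<Sum>i\<in>K. (fb i \<bullet> x)^2) \<partial>M) = (\<integral>x. (1 - \<xi>^2) \<partial>M)"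
    by (rule integral_cong_AE) (auto intro!: cont_meas continuous_intros
        intro: AE_mp[OF AE_S] simp: sumK)
  also have "\<dots> = 1 - \<xi>^2" by (simp add: prob_space)
  finally have s2: "(\<integral>x. (\<Sum>i\<in>K. (fb i \<bullet> x)^2) \<partial>M) = 1 - \<xi>^2" .
  have "(\<integral>x. (\<Sum>i\<in>K. (fb i \<bullet> x)^2) \<partial>M) = (\<Sum>i\<in>K. (\<integral>x. (fb i \<bullet> x)^2 \<partial>M))"
    by (rule Bochner_Integration.integral_sum) (intro integ continuous_intros)
  also have "\<dots> = real (card K) * c2" by (simp add: e2)
  finally have C2: "real (card K) * c2 = 1 - \<xi>^2" using s2 by simp
  have cross: "(\<integral>x. (fb i \<bullet> x)^2 * (fb j \<bullet> x)^2 \<partial>M) = c4 / 3"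
    if ij: "i \<in> K" "j \<in> K" "i \<noteq> j" for i j
  proof -
    let ?p = "fb i + fb j"
    have pv: "?p \<bullet> v = 0" using fbv ij by (simp add: inner_add_left)
    have pp: "?p \<bullet> ?p = 2" using fbi[of i j] fbi[of j i] fbi[of i i] fbi[of j j] ij
      by (simp add: inner_add_left inner_add_right)
    have pn: "norm ?p ^ 4 = 4"
    proof -
      have "norm ?p ^ 4 = (norm ?p ^ 2)^2" by simp
      also have "\<dots> = 4" by (simp add: power2_norm_eq_inner pp)
      finally show ?thesis .
    qed
    have h: "(\<integral>x. (?p \<bullet> x)^4 \<partial>M) = 4 * c4"
      using hom[OF pv f0v f0n, of 4] pn by (simp add: c4_def)
    have ex: "(?p \<bullet> x)^4 = (fb i \<bullet> x)^4 + (4 * ((fb i \<bullet> x)^3 * (fb j \<bullet> x)^1)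
       + (6 * ((fb i \<bullet> x)^2 * (fb j \<bullet> x)^2) + (4 * ((fb i \<bullet> x)^1 * (fb j \<bullet> x)^3)
       + (fb j \<bullet> x)^4)))" for x
      by (simp add: inner_add_left power4_eq_xxxx power3_eq_cube power2_eq_square algebra_simps)
    have o1: "(\<integral>x. (fb i \<bullet> x)^3 * (fb j \<bullet> x)^1 \<partial>M) = 0"
      by (rule odd_zero) (use fbv[OF ij(2)] fbi[of i j] ij in auto)
    have o2: "(\<integral>x. (fb i \<bullet> x)^1 * (fb j \<bullet> x)^3 \<partial>M) = 0"
      by (rule odd_zero) (use fbv[OF ij(2)] fbi[of i j] ij in auto)
    have "(\<integral>x. (?p \<bullet> x)^4 \<partial>M) = (\<integral>x. (fb i \<bullet> x)^4 \<partial>M) + (4 * (\<integral>x. (fb i \<bullet> x)^3 * (fb j \<bullet> x)^1 \<partial>M)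
       + (6 * (\<integral>x. (fb i \<bullet> x)^2 * (fb j \<bullet> x)^2 \<partial>M) + (4 * (\<integral>x. (fb i \<bullet> x)^1 * (fb j \<bullet> x)^3 \<partial>M)
       + (\<integral>x. (fb j \<bullet> x)^4 \<partial>M))))"
      unfolding ex
      by (subst Bochner_Integration.integral_add | subst integral_mult_right_zero
          | rule refl | (intro integ continuous_intros integrable_mult_right integrable_add))+
    then have "4 * c4 = 2 * c4 + 6 * (\<integral>x. (fb i \<bullet> x)^2 * (fb j \<bullet> x)^2 \<partial>M)"
      using h o1 o2 e4 ij by simp
    then show ?thesis by simp
  qed
  have rowsum: "(\<Sum>j\<in>K. (\<integral>x. (fb i \<bullet> x)^2 * (fb j \<bullet> x)^2 \<partial>M)) = c4 + (real (card K) - 1) * (c4 / 3)"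
    if i: "i \<in> K" for i
  proof -
    have "(\<Sum>j\<in>K. (\<integral>x. (fb i \<bullet> x)^2 * (fb j \<bullet> x)^2 \<partial>M))
        = (\<integral>x. (fb i \<bullet> x)^2 * (fb i \<bullet> x)^2 \<partial>M) + (\<Sum>j\<in>K - {i}. (\<integral>x. (fb i \<bullet> x)^2 * (fb j \<bullet> x)^2 \<partial>M))"
      using i fin by (simp add: sum.remove)
    also have "(\<integral>x. (fb i \<bullet> x)^2 * (fb i \<bullet> x)^2 \<partial>M) = c4"
      using e4[OF i] by (simp add: power4_eq_xxxx power2_eq_square mult.assoc)
    also have "(\<Sum>j\<in>K - {i}. (\<integral>x. (fb i \<bullet> x)^2 * (fb j \<bullet> x)^2 \<partial>M)) = (\<Sum>j\<in>K - {i}. c4 / 3)"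
      using cross i by (intro sum.cong) auto
    also have "\<dots> = (real (card K) - 1) * (c4 / 3)"
      using i fin cK2 by (simp add: card_Diff_singleton of_nat_diff)
    finally show ?thesis .
  qed
  have "(\<integral>x. (\<Sum>i\<in>K. \<Sum>j\<in>K. (fb i \<bullet> x)^2 * (fb j \<bullet> x)^2) \<partial>M) = (\<integral>x. (1 - \<xi>^2)^2 \<partial>M)"
  proof (rule integral_cong_AE)
    show "AE x in M. (\<Sum>i\<in>K. \<Sum>j\<in>K. (fb i \<bullet> x)^2 * (fb j \<bullet> x)^2) = (1 - \<xi>^2)^2"
      using AE_S
    proof eventually_elim
      case (elim x)
      have "(\<Sum>i\<in>K. \<Sum>j\<in>K. (fb i \<bullet> x)^2 * (fb j \<bullet> x)^2) = (\<Sum>i\<in>K. (fb i \<bullet> x)^2) * (\<Sum>i\<in>K. (fb i \<bullet> x)^2)"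
        by (simp add: sum_product)
      then show ?case using sumK[of x] elim by (simp add: power2_eq_square)
    qed
  qed (auto intro!: cont_meas continuous_intros)
  also have "\<dots> = (1 - \<xi>^2)^2" by (simp add: prob_space)
  finally have s4: "(\<integral>x. (\<Sum>i\<in>K. \<Sum>j\<in>K. (fb i \<bullet> x)^2 * (fb j \<bullet> x)^2) \<partial>M) = (1 - \<xi>^2)^2" .
  have "(\<integral>x. (\<Sum>i\<in>K. \<Sum>j\<in>K. (fb i \<bullet> x)^2 * (fb j \<bullet> x)^2) \<partial>M)
      = (\<Sum>i\<in>K. (\<integral>x. (\<Sum>j\<in>K. (fb i \<bullet> x)^2 * (fb j \<bullet> x)^2) \<partial>M))"
    by (rule Bochner_Integration.integral_sum) (intro integ continuous_intros)
  also have "\<dots> = (\<Sum>i\<in>K. (\<Sum>j\<in>K. (\<integral>x. (fb i \<bullet> x)^2 * (fb j \<bullet> x)^2 \<partial>M)))"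
    by (intro sum.cong refl Bochner_Integration.integral_sum integ continuous_intros)
  also have "\<dots> = (\<Sum>i\<in>K. c4 + (real (card K) - 1) * (c4 / 3))"
    by (intro sum.cong refl rowsum)
  also have "\<dots> = real (card K) * (c4 + (real (card K) - 1) * (c4 / 3))" by simp
  finally have C4: "real (card K) * (c4 + (real (card K) - 1) * (c4 / 3)) = (1 - \<xi>^2)^2"
    using s4 by simp
  have rK: "real (card K) = real CARD('n) - 1" using cardK d by (simp add: of_nat_diff)
  have dpos: "real CARD('n) - 1 > 0" "real CARD('n) + 1 > 0" using d by auto
  show ?thesis
  proof (rule that[OF f0v f0n])
    show "(\<integral>x. (f0 \<bullet> x)^2 \<partial>M) = (1 - \<xi>^2) / (real CARD('n) - 1)"
      using C2 rK dpos by (simp add: c2_def[symmetric] field_simps)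
    have "c4 * ((real CARD('n) - 1) * (real CARD('n) + 1)) = c4 * (real (card K) * (real (card K) + 2))"
      using rK by simp
    also have "\<dots> = 3 * (real (card K) * (c4 + (real (card K) - 1) * (c4 / 3)))"
      by (simp add: field_simps)
    also have "\<dots> = 3 * (1 - \<xi>^2)^2" using C4 by simp
    finally have "c4 * ((real CARD('n) - 1) * (real CARD('n) + 1)) = 3 * (1 - \<xi>^2)^2" .
    note eqn = this
    have nz: "(real CARD('n) - 1) * (real CARD('n) + 1) \<noteq> 0" using dpos by simp
    have "c4 = 3 * (1 - \<xi>^2)^2 / ((real CARD('n) - 1) * (real CARD('n) + 1))"
      by (metis nonzero_mult_div_cancel_right nz eqn)
    then show "(\<integral>x. (f0 \<bullet> x)^4 \<partial>M) = 3 * (1 - \<xi>^2)^2 / ((real CARD('n) - 1) * (real CARD('n) + 1))"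
      by (simp add: c4_def)
  qed
qed

end


lemma sin_lower5: fixes x :: real assumes "0 \<le> x"
  shows "x - x^3/6 - x^5/120 \<le> sin x"
proof -
  have "\<bar>sin x - (\<Sum>m<5. sin_coeff m * x ^ m)\<bar> \<le> inverse (fact 5) * \<bar>x\<bar> ^ 5"
    by (rule Maclaurin_sin_bound)
  moreover have "(\<Sum>m<5. sin_coeff m * x ^ m) = x - x^3/6"
  proof -
    have e: "(\<Sum>m<5. sin_coeff m * x ^ m) = sin_coeff 0 * x^0 + sin_coeff 1 * x^1 + sin_coeff 2 * x^2 + sin_coeff 3 * x^3 + sin_coeff 4 * x^4"
      by (simp add: eval_nat_numeral)
    have "sin_coeff 0 = 0" "sin_coeff 1 = 1" "sin_coeff 2 = 0" "sin_coeff 4 = 0" "sin_coeff 3 = -1/6"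
      by (simp_all add: sin_coeff_def fact_numeral)
    then show ?thesis using e by simp
  qed
  moreover have "inverse (fact 5) * \<bar>x\<bar> ^ 5 = x^5/120"
  proof -
    have f: "(fact 5::real) = 120" by (simp add: fact_numeral)
    have ax: "\<bar>x\<bar> ^ 5 = x^5" using assms by simp
    have "inverse (120::real) * x^5 = x^5/120" by simp
    then show ?thesis by (simp only: f ax)
  qed
  ultimately have h: "\<bar>sin x - (x - x^3/6)\<bar> \<le> x^5/120" by (simp only:)
  then show ?thesis unfolding abs_le_iff by linarith
qed

lemma sin_lin_lower: fixes \<theta> :: real
  assumes "0 \<le> \<theta>" "\<theta> \<le> 9/10*pi" shows "27/250 * \<theta> \<le> sin \<theta>"
proof (cases "\<theta> \<le> pi/2")
  case True
  have p: "pi \<le> 3.1415926535899" using pi_approx by simp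
  have t2: "\<theta>^2 \<le> 2.5"
  proof -
    have "\<theta>^2 \<le> (pi/2)^2" using True assms by (intro power_mono) auto
    also have "\<dots> \<le> 1.5708^2" using p by (intro power_mono) auto
    also have "\<dots> \<le> 2.5" by (simp add: power2_eq_square)
    finally show ?thesis .
  qed
  have t4: "\<theta>^4 \<le> 6.25"
  proof -
    have "\<theta>^4 = (\<theta>^2)^2" by simp
    also have "\<dots> \<le> 2.5^2" using t2 by (intro power_mono) auto
    finally show ?thesis by (simp add: power2_eq_square)
  qed
  have b3: "\<theta>^3 \<le> (5/2)*\<theta>"
  proof -
    have "\<theta>^3 = \<theta> * \<theta>^2" by algebra
    also have "\<dots> \<le> \<theta> * (5/2)" using t2 assms by (intro mult_left_mono) auto
    finally show ?thesis by simp
  qed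
  have b5: "\<theta>^5 \<le> (25/4)*\<theta>"
  proof -
    have "\<theta>^5 = \<theta> * \<theta>^4" by algebra
    also have "\<dots> \<le> \<theta> * (25/4)" using t4 assms by (intro mult_left_mono) auto
    finally show ?thesis by simp
  qed
  have "27/250 * \<theta> \<le> \<theta> - \<theta>^3/6 - \<theta>^5/120" using b3 b5 assms by linarith
  then show ?thesis using sin_lower5[OF assms(1)] by linarith
next
  case False
  define y where "y = pi - \<theta>"
  have p: "314159/100000 \<le> pi" "pi \<le> 3927/1250" using pi_approx by simp_all
  have sy: "sin \<theta> = sin y" unfolding y_def by simp
  have "sin (pi/10) \<le> sin y" using False assms unfolding y_def
    by (intro sin_monotone_2pi_le) auto
  moreover have "pi/10 - (pi/10)^3/6 - (pi/10)^5/120 \<le> sin (pi/10)"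
    by (rule sin_lower5) simp
  moreover have "(pi/10)^3 \<le> 4/125" "(pi/10)^5 \<le> 1/250"
  proof -
    have "(pi/10)^3 \<le> (3927/12500)^3" using p by (intro power_mono) auto
    then show "(pi/10)^3 \<le> 4/125" by (simp add: power3_eq_cube)
    have "(pi/10)^5 \<le> (3927/12500)^5" using p by (intro power_mono) auto
    then show "(pi/10)^5 \<le> 1/250" by (simp add: eval_nat_numeral)
  qed
  ultimately have "153/500 \<le> sin y" using p by linarith
  moreover have "27/250 * \<theta> \<le> 153/500" using assms p by linarith
  ultimately show ?thesis using sy by linarith
qed



lemma pw:
  fixes A Z \<xi> t :: real assumes "\<bar>A\<bar> \<le> \<xi>" "t > 0"
  shows "(A + Z) * (if A + Z < 0 then 1 else 0)
     \<le> (A + \<xi>)/2 + (1/2) * Z + (-3/(4*t)) * Z^2 + (1/(4*t^3)) * Z^4"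
proof -
  define z where "z = \<bar>Z\<bar>"
  have z0: "0 \<le> z" by (simp add: z_def)
  have "0 \<le> z*(z-t)^2*(z+2*t)" using z0 assms by (intro mult_nonneg_nonneg) auto
  also have "z*(z-t)^2*(z+2*t) = z^4 - 3*t^2*z^2 + 2*t^3*z"
    by (simp add: algebra_simps power2_eq_square power3_eq_cube power4_eq_xxxx)
  finally have "3*t^2*z^2 - z^4 \<le> 2*t^3*z" by simp
  moreover have "Z^2 = z^2" "Z^4 = z^4" by (simp_all add: z_def power_even_abs)
  ultimately have "3*t^2*Z^2 - Z^4 \<le> 2*t^3*z" by simp
  then have "(3*t^2*Z^2 - Z^4) / (4*t^3) \<le> (2*t^3*z) / (4*t^3)"
    using assms by (intro divide_right_mono) auto
  also have "(2*t^3*z) / (4*t^3) = z/2" using assms by simp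
  also have "(3*t^2*Z^2 - Z^4) / (4*t^3) = -((-3/(4*t)) * Z^2 + (1/(4*t^3)) * Z^4)"
    using assms by (simp add: field_simps power2_eq_square power3_eq_cube)
  finally have key: "-((-3/(4*t)) * Z^2 + (1/(4*t^3)) * Z^4) \<le> z/2" .
  have h1: "(A + Z) * (if A + Z < 0 then 1 else 0) \<le> (A + Z - \<bar>Z\<bar> + \<bar>A\<bar>)/2"
    by (cases "A + Z < 0") (auto simp: abs_if split: if_splits)
  have gen: "(A + Z - \<bar>Z\<bar> + \<bar>A\<bar>)/2 \<le> (A + \<xi>)/2 + (1/2) * Z + P + Q"
    if "-(P+Q) \<le> \<bar>Z\<bar>/2" for P Q using assms(1) that by (simp add: field_simps)
  have h2: "(A + Z - \<bar>Z\<bar> + \<bar>A\<bar>)/2 \<le> (A + \<xi>)/2 + (1/2) * Z + (-3/(4*t)) * Z^2 + (1/(4*t^3)) * Z^4"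
    using gen key unfolding z_def by blast
  show ?thesis using h1 h2 by (rule order_trans)
qed

lemma final_ineq:
  fixes s \<theta> d R :: real
  assumes d3: "d \<ge> 3" and s0: "s > 0" and st: "27/250 * \<theta> \<le> s" and t0: "\<theta> \<ge> 0"
    and R1: "5/6 \<le> R" "R \<le> 1"
  shows "\<theta> / (9 * sqrt d) \<le> 3 * s^2 * (R / (d-1)) / (s * (7/4) / sqrt d)
            - s^4 * (3 * R^2 / ((d-1)*(d+1))) / (s * (7/4) / sqrt d)^3"
proof -
  define q where "q = sqrt d"
  have q0: "q > 0" using d3 by (simp add: q_def)
  have qd: "q^2 = d" using d3 by (simp add: q_def)
  have q3: "q^3 = q * d" using qd by (simp add: power3_eq_cube power2_eq_square)
  have d1: "d - 1 > 0" "d + 1 > 0" using d3 by auto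
  have T1: "3 * s^2 * (R / (d-1)) / (s * (7/4) / q) = (12/7) * (s * q / (d-1)) * R"
    using q0 s0 d1 by (simp add: field_simps power2_eq_square)
  have t3: "(s * (7/4) / q)^3 = (343/64) * s^3 / (q * d)"
    by (simp add: power_divide power_mult_distrib q3)
  have T2: "s^4 * (3 * R^2 / ((d-1)*(d+1))) / (s * (7/4) / q)^3
       = (192/343) * (s * q / (d-1)) * R^2 * (d / (d+1))"
  proof -
    define Y where "Y = 3 * R^2 / ((d-1)*(d+1))"
    have "s^4 * Y / ((343/64) * s^3 / (q * d)) = (64/343) * s * Y * q * d"
      using q0 s0 d1 by (simp add: field_simps power4_eq_xxxx power3_eq_cube)
    also have "\<dots> = (192/343) * (s * q / (d-1)) * R^2 * (d / (d+1))"
      using d1 by (simp add: Y_def field_simps)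
    finally show ?thesis unfolding t3 Y_def .
  qed
  define w where "w = s * q / (d-1)"
  have w0: "w > 0" using q0 s0 d1 by (simp add: w_def)
  have dd: "d / (d+1) \<le> 1" using d1 by simp
  have "R^2 * (d / (d+1)) \<le> R^2" using dd by (intro mult_left_le) auto
  then have "w * (R^2 * (d / (d+1))) \<le> w * R^2" using w0 by (intro mult_left_mono) auto
  moreover have g: "(1039/1000) \<le> (12/7) * R - (192/343) * R^2"
  proof -
    have "0 \<le> (R - 5/6) * (12/7 - 192/343*(R+5/6))" using R1 by (intro mult_nonneg_nonneg) auto
    also have "\<dots> = ((12/7) * R - (192/343) * R^2) - ((12/7) * (5/6) - (192/343) * (5/6)^2)"
      by (simp add: field_simps power2_eq_square)
    finally have "(12/7) * (5/6) - (192/343) * (5/6)^2 \<le> (12/7) * R - (192/343) * R^2" by simp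
    moreover have "(1039/1000) \<le> (12/7) * (5/6) - (192/343) * ((5::real)/6)^2" by (simp add: power2_eq_square)
    ultimately show ?thesis by linarith
  qed
  ultimately have "w * (1039/1000) \<le> (12/7) * w * R - (192/343) * w * R^2 * (d / (d+1))"
  proof -
    assume h1: "w * (R^2 * (d / (d+1))) \<le> w * R^2" and g: "(1039/1000) \<le> (12/7) * R - (192/343) * R^2"
    have A: "w*(1039/1000) \<le> w*((12/7)*R - (192/343)*R^2)" using g w0 by (intro mult_left_mono) auto
    have B: "w*((12/7)*R - (192/343)*R^2) = (12/7)*w*R - (192/343)*(w*R^2)" by (simp add: algebra_simps)
    have C: "(192/343)*w*R^2*(d/(d+1)) = (192/343)*(w*(R^2*(d/(d+1))))" by (simp add: algebra_simps)
    show ?thesis using A B C h1 by linarith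
  qed
  moreover have "s / q \<le> w"
  proof -
    have dq: "d = q * q" using qd by (simp add: power2_eq_square)
    have "s / q = s * q / d" unfolding dq using q0 by simp
    also have "\<dots> \<le> s * q / (d - 1)" using s0 q0 d1 by (intro divide_left_mono) auto
    finally show ?thesis by (simp add: w_def)
  qed
  moreover have "\<theta> / (9 * q) \<le> (s / q) * (1039/1000)"
  proof -
    have "\<theta> / 9 \<le> s * (1039/1000)" using st t0 by simp
    then have "(\<theta> / 9) / q \<le> (s * (1039/1000)) / q" using q0 by (intro divide_right_mono) auto
    then show ?thesis by simp
  qed
  ultimately show ?thesis unfolding q_def[symmetric] T1 T2 w_def[symmetric] by simp
qed


lemma lin_helper: fixes I A P Q K Z xi :: real
  assumes "I \<le> A + P + Q" "K \<le> Z" "P + Q = -(1/4) * Z" "A \<le> xi"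
  shows "I \<le> xi - K / 4"
  using assms by linarith

theorem lemma19:
  fixes u v :: "real ^ 'n" and \<xi> \<theta> :: real and M :: "(real ^ 'n) measure"
  assumes d: "CARD('n) \<ge> 3"
    and u: "norm u = 1" and v: "norm v = 1"
    and theta: "\<theta> = arccos (u \<bullet> v)" and theta_le: "\<theta> \<le> 9 / 10 * pi"
    and xi0: "0 \<le> \<xi>" and xi1: "\<xi> \<le> \<theta> / (4 * sqrt (real CARD('n)))"
    and M: "uniform_on_slice M v \<xi>"
  shows "(\<integral>x. u \<bullet> x \<partial>M) \<le> \<xi>
    \<and> (\<integral>x. (u \<bullet> x)\<^sup>2 \<partial>M) \<le> 5 * \<theta>\<^sup>2 / real CARD('n)
    \<and> (\<integral>x. (u \<bullet> x) * indicator {y. u \<bullet> y < 0} x \<partial>M)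
           \<le> \<xi> - \<theta> / (36 * sqrt (real CARD('n)))"
proof -
  interpret slice_ctx M v \<xi> by unfold_locales (use M v in auto)
  interpret prob_space M by (rule ps)
  define a where "a = u \<bullet> v"
  define D where "D = real CARD('n)"
  define R where "R = 1 - \<xi>^2"
  have D3: "D \<ge> 3" using d by (simp add: D_def)
  have a1: "\<bar>a\<bar> \<le> 1" using Cauchy_Schwarz_ineq2[of u v] u v by (simp add: a_def)
  have th: "\<theta> = arccos a" by (simp add: theta a_def)
  have th0: "0 \<le> \<theta>" using a1 th arccos_lbound by auto
  have vv: "v \<bullet> v = 1" using v by (simp add: power2_norm_eq_inner[symmetric])
  have uu: "u \<bullet> u = 1" using u by (simp add: power2_norm_eq_inner[symmetric])
  define p where "p = u - a *\<^sub>R v"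
  have pv: "p \<bullet> v = 0" by (simp add: p_def a_def inner_diff_left vv)
  have np2: "(norm p)^2 = 1 - a^2"
  proof -
    have "(norm p)^2 = p \<bullet> p" by (simp add: power2_norm_eq_inner)
    also have "\<dots> = u \<bullet> u - 2 * a * (u \<bullet> v) + a^2 * (v \<bullet> v)"
      by (simp add: p_def inner_diff_left inner_diff_right inner_commute[of v u] power2_eq_square algebra_simps)
    also have "\<dots> = 1 - a^2" by (simp add: uu vv a_def[symmetric] power2_eq_square)
    finally show ?thesis .
  qed
  define s where "s = norm p"
  have s0: "0 \<le> s" by (simp add: s_def)
  have sinp: "sin \<theta> = s"
  proof -
    have "sin \<theta> = sqrt (1 - a^2)" using th a1 by (simp add: sin_arccos abs_le_iff)
    also have "\<dots> = s" by (simp add: s_def np2[symmetric])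
    finally show ?thesis .
  qed
  have ux: "u \<bullet> x = a * \<xi> + p \<bullet> x" if "v \<bullet> x = \<xi>" for x
    using that by (simp add: p_def inner_diff_left)
  obtain f0 where f0: "f0 \<bullet> v = 0" "norm f0 = 1"
    and c2: "(\<integral>x. (f0 \<bullet> x)^2 \<partial>M) = (1 - \<xi>^2) / (real CARD('n) - 1)"
    and c4: "(\<integral>x. (f0 \<bullet> x)^4 \<partial>M) = 3 * (1 - \<xi>^2)^2 / ((real CARD('n) - 1) * (real CARD('n) + 1))"
    using moments[OF d] by blast
  have E1: "(\<integral>x. p \<bullet> x \<partial>M) = 0"
    using odd_zero[where q=p and p=0 and a=0 and b=1] pv by simp
  have E2: "(\<integral>x. (p \<bullet> x)^2 \<partial>M) = s^2 * (R / (D - 1))"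
    using hom[OF pv f0, of 2] c2 by (simp add: s_def R_def D_def)
  have E4: "(\<integral>x. (p \<bullet> x)^4 \<partial>M) = s^4 * (3 * R^2 / ((D - 1) * (D + 1)))"
    using hom[OF pv f0, of 4] c4 by (simp add: s_def R_def D_def)
  have ip: "integrable M (\<lambda>x. (p \<bullet> x)^k)" for k by (intro integ continuous_intros)
  have ip1: "integrable M (\<lambda>x. p \<bullet> x)" by (intro integ continuous_intros)
  have lin4: "(\<integral>x. k0 + k1 * (p \<bullet> x) + k2 * (p \<bullet> x)^2 + k4 * (p \<bullet> x)^4 \<partial>M)
     = k0 + k1 * (\<integral>x. p \<bullet> x \<partial>M) + k2 * (\<integral>x. (p \<bullet> x)^2 \<partial>M) + k4 * (\<integral>x. (p \<bullet> x)^4 \<partial>M)"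
    for k0 k1 k2 k4
  proof -
    have "(\<integral>x. k0 + k1 * (p \<bullet> x) + k2 * (p \<bullet> x)^2 + k4 * (p \<bullet> x)^4 \<partial>M)
       = (\<integral>x. k0 + k1 * (p \<bullet> x) + k2 * (p \<bullet> x)^2 \<partial>M) + (\<integral>x. k4 * (p \<bullet> x)^4 \<partial>M)"
      by (rule Bochner_Integration.integral_add; intro integ continuous_intros)
    also have "(\<integral>x. k0 + k1 * (p \<bullet> x) + k2 * (p \<bullet> x)^2 \<partial>M)
       = (\<integral>x. k0 + k1 * (p \<bullet> x) \<partial>M) + (\<integral>x. k2 * (p \<bullet> x)^2 \<partial>M)"
      by (rule Bochner_Integration.integral_add; intro integ continuous_intros)
    also have "(\<integral>x. k0 + k1 * (p \<bullet> x) \<partial>M) = (\<integral>x. k0 \<partial>M) + (\<integral>x. k1 * (p \<bullet> x) \<partial>M)"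
      by (rule Bochner_Integration.integral_add; intro integ continuous_intros)
    also have "(\<integral>x. k0 \<partial>M) = k0" by (simp add: prob_space)
    finally show ?thesis by simp
  qed
  have xi2: "\<xi>^2 \<le> \<theta>^2 / (16 * D)"
  proof -
    have "\<xi>^2 \<le> (\<theta> / (4 * sqrt D))^2" using xi0 xi1 by (intro power_mono) (auto simp: D_def)
    also have "\<dots> = \<theta>^2 / (16 * D)" using D3 by (simp add: power_divide power_mult_distrib)
    finally show ?thesis .
  qed
  have sth: "s \<le> \<theta>" using abs_sin_x_le_abs_x[of \<theta>] sinp th0 s0 by simp
  have R0: "0 \<le> R" "R \<le> 1"
  proof -
    have "\<theta>^2 \<le> (9/10*pi)^2" using th0 theta_le by (intro power_mono) auto
    also have "\<dots> \<le> 2.82744^2" using pi_approx by (intro power_mono) auto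
    also have "\<dots> \<le> 8" by (simp add: power2_eq_square)
    finally have "\<theta>^2 \<le> 8" .
    then have "\<theta>^2 / (16 * D) \<le> 8 / (16 * D)" using D3 by (intro divide_right_mono) auto
    also have "\<dots> \<le> 8 / 48" using D3 by (intro divide_left_mono) auto
    finally show "0 \<le> R" using xi2 by (simp add: R_def)
    show "R \<le> 1" by (simp add: R_def)
  qed
  have R56: "5/6 \<le> R"
  proof -
    have "\<theta>^2 \<le> (9/10*pi)^2" using th0 theta_le by (intro power_mono) auto
    also have "\<dots> \<le> 2.82744^2" using pi_approx by (intro power_mono) auto
    also have "\<dots> \<le> 8" by (simp add: power2_eq_square)
    finally have "\<theta>^2 \<le> 8" .
    then have "\<theta>^2 / (16 * D) \<le> 8 / (16 * D)" using D3 by (intro divide_right_mono) auto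
    also have "\<dots> \<le> 8 / 48" using D3 by (intro divide_left_mono) auto
    finally show ?thesis using xi2 by (simp add: R_def)
  qed
  have I1: "(\<integral>x. u \<bullet> x \<partial>M) = (\<integral>x. a * \<xi> + 1 * (p \<bullet> x) + 0 * (p \<bullet> x)^2 + 0 * (p \<bullet> x)^4 \<partial>M)"
  proof (rule integral_cong_AE)
    show "AE x in M. u \<bullet> x = a * \<xi> + 1 * (p \<bullet> x) + 0 * (p \<bullet> x)^2 + 0 * (p \<bullet> x)^4"
      using AE_S by eventually_elim (simp add: ux)
  qed (rule cont_meas, intro continuous_intros)+
  also have "\<dots> = a * \<xi>" unfolding lin4 by (simp add: E1)
  finally have C1v: "(\<integral>x. u \<bullet> x \<partial>M) = a * \<xi>" .
  have C1: "(\<integral>x. u \<bullet> x \<partial>M) \<le> \<xi>"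
    unfolding C1v using mult_right_mono[of a 1 \<xi>] a1 xi0 by (simp add: abs_le_iff)
  have I2: "(\<integral>x. (u \<bullet> x)\<^sup>2 \<partial>M) = (\<integral>x. (a*\<xi>)^2 + (2*a*\<xi>) * (p \<bullet> x) + 1 * (p \<bullet> x)^2 + 0 * (p \<bullet> x)^4 \<partial>M)"
  proof (rule integral_cong_AE)
    show "AE x in M. (u \<bullet> x)\<^sup>2 = (a*\<xi>)^2 + (2*a*\<xi>) * (p \<bullet> x) + 1 * (p \<bullet> x)^2 + 0 * (p \<bullet> x)^4"
      using AE_S
    proof eventually_elim
      case (elim x)
      then have "u \<bullet> x = a*\<xi> + p \<bullet> x" by (simp add: ux)
      then show ?case by (simp add: power2_eq_square algebra_simps)
    qed
  qed (rule cont_meas, intro continuous_intros)+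
  also have "\<dots> = (a*\<xi>)^2 + s^2 * (R / (D - 1))"
    unfolding lin4 by (simp add: E1 E2)
  finally have C2v: "(\<integral>x. (u \<bullet> x)\<^sup>2 \<partial>M) = (a*\<xi>)^2 + s^2 * (R / (D - 1))" .
  have C2: "(\<integral>x. (u \<bullet> x)\<^sup>2 \<partial>M) \<le> 5 * \<theta>\<^sup>2 / real CARD('n)"
  proof -
    have a2: "a^2 \<le> 1" using a1 by (simp add: abs_square_le_1)
    have "(a*\<xi>)^2 = a^2 * \<xi>^2" by (simp add: power_mult_distrib)
    also have "\<dots> \<le> 1 * \<xi>^2" using a2 by (rule mult_right_mono) simp
    finally have ax: "(a*\<xi>)^2 \<le> \<xi>^2" by simp
    have s2: "s^2 \<le> \<theta>^2" using sth s0 by (rule power_mono)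
    have "s^2 * R \<le> \<theta>^2 * 1" using s2 R0(2) by (rule mult_mono) (use R0 in auto)
    then have "s^2 * R / (D - 1) \<le> \<theta>^2 / (D - 1)" using D3 by (intro divide_right_mono) auto
    also have "\<theta>^2 / (D - 1) = \<theta>^2 * (1 / (D - 1))" by simp
    also have "\<dots> \<le> \<theta>^2 * ((3/2) / D)"
    proof (rule mult_left_mono)
      show "1 / (D - 1) \<le> (3/2) / D" using D3 by (simp add: field_simps)
    qed simp
    finally have b: "s^2 * (R / (D - 1)) \<le> \<theta>^2 * ((3/2) / D)" by simp
    have c: "\<theta>^2 / (16 * D) + \<theta>^2 * ((3/2) / D) \<le> 5 * \<theta>^2 / D"
      using D3 by (simp add: field_simps)
    have "(\<integral>x. (u \<bullet> x)\<^sup>2 \<partial>M) \<le> 5 * \<theta>^2 / D"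
      using C2v ax b c xi2 by linarith
    then show ?thesis by (simp add: D_def)
  qed
  define t where "t = (if s > 0 then s * (7/4) / sqrt D else 1)"
  have t0: "t > 0" using D3 s0 by (simp add: t_def)
  define F where "F x = (a*\<xi> + \<xi>)/2 + (1/2) * (p \<bullet> x) + (-3/(4*t)) * (p \<bullet> x)^2 + (1/(4*t^3)) * (p \<bullet> x)^4" for x
  have axi: "\<bar>a * \<xi>\<bar> \<le> \<xi>"
  proof -
    have "\<bar>a * \<xi>\<bar> = \<bar>a\<bar> * \<xi>" using xi0 by (simp add: abs_mult)
    also have "\<dots> \<le> 1 * \<xi>" using a1 xi0 by (rule mult_right_mono)
    finally show ?thesis by simp
  qed
  have Ui: "{y. u \<bullet> y < 0} \<in> sets borel" by (intro borel_open open_Collect_less continuous_intros)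
  have Gm: "(\<lambda>x. (u \<bullet> x) * indicator {y. u \<bullet> y < 0} x) \<in> borel_measurable M"
    unfolding meas_iff
  proof (rule borel_measurable_times)
    show "(\<lambda>x. u \<bullet> x) \<in> borel_measurable borel"
      by (rule borel_measurable_continuous_onI) (intro continuous_intros)
    show "indicator {y. u \<bullet> y < 0} \<in> borel_measurable borel"
      by (rule borel_measurable_indicator[OF Ui])
  qed
  have Gi: "integrable M (\<lambda>x. (u \<bullet> x) * indicator {y. u \<bullet> y < 0} x)"
  proof (rule integrable_const_bound[where B=1])
    show "AE x in M. norm ((u \<bullet> x) * indicator {y. u \<bullet> y < 0} x) \<le> 1"
      using AE_S
    proof eventually_elim
      case (elim x)
      have "\<bar>u \<bullet> x\<bar> \<le> 1" using Cauchy_Schwarz_ineq2[of u x] u elim by simp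
      then show ?case by (auto simp: indicator_def abs_le_iff)
    qed
  qed (rule Gm)
  have Fi: "integrable M F" unfolding F_def by (intro integ continuous_intros)
  have "(\<integral>x. (u \<bullet> x) * indicator {y. u \<bullet> y < 0} x \<partial>M) \<le> (\<integral>x. F x \<partial>M)"
  proof (rule integral_mono_AE[OF Gi Fi])
    show "AE x in M. (u \<bullet> x) * indicator {y. u \<bullet> y < 0} x \<le> F x"
      using AE_S
    proof eventually_elim
      case (elim x)
      have "(u \<bullet> x) * indicator {y. u \<bullet> y < 0} x = (a*\<xi> + p \<bullet> x) * (if a*\<xi> + p \<bullet> x < 0 then 1 else 0)"
        using elim by (simp add: ux indicator_def)
      also have "\<dots> \<le> F x" unfolding F_def by (rule pw[OF axi t0])
      finally show ?case .
    qed
  qed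
  also have "(\<integral>x. F x \<partial>M) = (a*\<xi> + \<xi>)/2 + (-3/(4*t)) * (s^2 * (R / (D - 1)))
       + (1/(4*t^3)) * (s^4 * (3 * R^2 / ((D - 1) * (D + 1))))"
    unfolding F_def lin4 by (simp add: E1 E2 E4)
  finally have C3a: "(\<integral>x. (u \<bullet> x) * indicator {y. u \<bullet> y < 0} x \<partial>M)
     \<le> (a*\<xi> + \<xi>)/2 + (-3/(4*t)) * (s^2 * (R / (D - 1)))
       + (1/(4*t^3)) * (s^4 * (3 * R^2 / ((D - 1) * (D + 1))))" .
  have axi2: "a * \<xi> \<le> \<xi>" using axi by simp
  have C3: "(\<integral>x. (u \<bullet> x) * indicator {y. u \<bullet> y < 0} x \<partial>M) \<le> \<xi> - \<theta> / (36 * sqrt (real CARD('n)))"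
  proof (cases "s > 0")
    case True
    have tt: "t = s * (7/4) / sqrt D" using True by (simp add: t_def)
    have key: "\<theta> / (9 * sqrt D) \<le> 3 * s^2 * (R / (D-1)) / t - s^4 * (3 * R^2 / ((D-1)*(D+1))) / t^3"
      unfolding tt
      by (rule final_ineq[OF D3 True _ th0 R56 R0(2)]) (use sin_lin_lower[OF th0 theta_le] sinp in simp)
    have reX: "(-3/(4*t)) * X + (1/(4*t^3)) * Y = -(1/4) * (3 * X / t - Y / t^3)" for X Y
      using t0 by (simp add: field_simps)
    have q: "\<theta> / (36 * sqrt D) = (\<theta> / (9 * sqrt D)) / 4" by simp
    have key': "\<theta> / (9 * sqrt D) \<le> 3 * (s^2 * (R / (D - 1))) / t - (s^4 * (3 * R^2 / ((D - 1) * (D + 1)))) / t^3"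
      using key by (simp add: mult.assoc)
    have A: "(a*\<xi> + \<xi>)/2 \<le> \<xi>" using axi2 by simp
    have "(\<integral>x. (u \<bullet> x) * indicator {y. u \<bullet> y < 0} x \<partial>M) \<le> \<xi> - (\<theta> / (9 * sqrt D)) / 4"
      by (rule lin_helper[OF C3a key' reX A])
    then have "(\<integral>x. (u \<bullet> x) * indicator {y. u \<bullet> y < 0} x \<partial>M) \<le> \<xi> - \<theta> / (36 * sqrt D)"
      by (simp only: q)
    then show ?thesis by (simp add: D_def)
  next
    case False
    then have s00: "s = 0" using s0 by simp
    have "\<theta> = 0"
    proof (rule ccontr)
      assume "\<theta> \<noteq> 0"
      then have "0 < sin \<theta>" using th0 theta_le pi_gt_zero by (intro sin_gt_zero) auto
      then show False using sinp s00 by simp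
    qed
    then show ?thesis using C3a s00 axi2 by simp
  qed
  show ?thesis using C1 C2 C3 by blast
qed

end
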